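(* Let $15\le y<x$ and let $\Psi(x,y)$ be the number of positive integers $n\le x$ having no prime divisor $>y$. Then \[ \Psi(x,y)\le C\,x\,e^{-u/2},\qquad u=\frac{\log x}{\log y},\quad C=67.21. \] *)

theory Defs
  imports Complex_Main "HOL-Computational_Algebra.Primes"
begin

definition Psi :: "real \<Rightarrow> real \<Rightarrow> nat" where
  "Psi x y = card {n::nat. 1 \<le> n \<and> real n \<le> x \<and> (\<forall>p. prime p \<and> p dvd n \<longrightarrow> real p \<le> y)}"

end

theory Submission
  imports Defs
begin

definition Sm :: "real \<Rightarrow> real \<Rightarrow> nat set" where
  "Sm t y = {n::nat. 1 \<le> n \<and> real n \<le> t \<and> (\<forall>p. prime p \<and> p dvd n \<longrightarrow> real p \<le> y)}"

lemma Psi_Sm: "Psi t y = card (Sm t y)"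
  by (simp add: Psi_def Sm_def)

lemma Sm_sub: "Sm t y \<subseteq> {1..nat \<lfloor>t\<rfloor>}"
proof
  fix n assume "n \<in> Sm t y"
  then have "1 \<le> n" "real n \<le> t" by (auto simp: Sm_def)
  then show "n \<in> {1..nat \<lfloor>t\<rfloor>}" by (simp add: le_nat_floor)
qed

lemma Sm_finite: "finite (Sm t y)"
  using Sm_sub finite_subset by blast

lemma Psi_small: "t < 1 \<Longrightarrow> Psi t y = 0"
proof -
  assume "t < 1"
  then have "Sm t y = {}" by (auto simp: Sm_def)
  then show ?thesis by (simp add: Psi_Sm)
qed

lemma Psi_triv: assumes "t \<ge> 0" shows "real (Psi t y) \<le> t"
proof -
  have "card (Sm t y) \<le> card {1..nat \<lfloor>t\<rfloor>}" by (rule card_mono[OF _ Sm_sub]) simp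
  then have "real (Psi t y) \<le> real (nat \<lfloor>t\<rfloor>)" by (simp add: Psi_Sm)
  also have "\<dots> \<le> t" using assms by linarith
  finally show ?thesis .
qed

lemma lnfact: "n \<ge> 1 \<Longrightarrow> ln (fact n :: real) \<le> real n * ln (real n) - real n + ln (real n) + 1"
proof (induction n rule: dec_induct)
  case base then show ?case by simp
next
  case (step n)
  have n: "real n \<ge> 1" using step by simp
  have "ln (real n / (real n + 1)) \<le> real n / (real n + 1) - 1"
    by (rule ln_le_minus_one) (use n in auto)
  also have "\<dots> = - 1 / (real n + 1)" using n by (simp add: field_simps)
  finally have "ln (real n) - ln (real n + 1) \<le> - 1 / (real n + 1)"
    using n by (simp add: ln_div)
  then have key: "(real n + 1) * (ln (real n + 1) - ln (real n)) \<ge> 1"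
    using n by (simp add: field_simps)
  have "ln (fact (Suc n) :: real) = ln (real n + 1) + ln (fact n)"
    by (simp add: ln_mult add.commute)
  also have "\<dots> \<le> ln (real n + 1) + (real n * ln (real n) - real n + ln (real n) + 1)"
    using step.IH by simp
  also have "\<dots> \<le> real (Suc n) * ln (real (Suc n)) - real (Suc n) + ln (real (Suc n)) + 1"
    using key by (simp add: algebra_simps)
  finally show ?case .
qed

lemma ln_nat_decomp:
  assumes "n \<noteq> 0"
  shows "ln (real n) = (\<Sum>p\<in>prime_factors n. real (multiplicity p n) * ln (real p))"
proof -
  have "(\<Prod>p\<in>prime_factors n. p ^ multiplicity p n) = n"
    using prod_prime_factors[of n] assms by simp
  then have "real n = real (\<Prod>p\<in>prime_factors n. p ^ multiplicity p n)" by simp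
  then have "real n = (\<Prod>p\<in>prime_factors n. real p ^ multiplicity p n)"
    by (simp only: of_nat_prod of_nat_power)
  then have "ln (real n) = (\<Sum>p\<in>prime_factors n. ln (real p ^ multiplicity p n))"
    by (simp only:) (rule ln_prod, auto simp: in_prime_factors_iff prime_gt_0_nat)
  also have "\<dots> = (\<Sum>p\<in>prime_factors n. real (multiplicity p n) * ln (real p))"
    by (simp add: ln_realpow)
  finally show ?thesis .
qed

lemma sum_lnp_le:
  assumes "n \<noteq> 0"
  shows "(\<Sum>p\<in>prime_factors n. ln (real p)) \<le> ln (real n)"
proof -
  have "(\<Sum>p\<in>prime_factors n. ln (real p)) \<le> (\<Sum>p\<in>prime_factors n. real (multiplicity p n) * ln (real p))"
  proof (rule sum_mono)
    fix p assume p: "p \<in> prime_factors n"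
    have pr: "prime p" "p dvd n" using p by (auto simp: in_prime_factors_iff)
    have "multiplicity p n > 0"
      using pr assms by (simp add: prime_multiplicity_gt_zero_iff)
    then have "multiplicity p n \<ge> 1" by simp
    moreover have "real p \<ge> 1" using prime_ge_1_nat[OF pr(1)] by simp
    then have "ln (real p) \<ge> 0" by simp
    ultimately have "1 * ln (real p) \<le> real (multiplicity p n) * ln (real p)"
      by (intro mult_right_mono) auto
    then show "ln (real p) \<le> real (multiplicity p n) * ln (real p)" by simp
  qed
  then show ?thesis using ln_nat_decomp[OF assms] by simp
qed

lemma card_multiples: "N div p \<le> card {m\<in>{1..N}. p dvd m}"
proof (cases "p = 0")
  case True then show ?thesis by simp
next
  case False
  have "card {1..N div p} \<le> card {m\<in>{1..N}. p dvd m}"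
  proof (rule card_inj_on_le[where f = "\<lambda>j. j * p"])
    show "inj_on (\<lambda>j. j * p) {1..N div p}" using False by (auto simp: inj_on_def)
    show "(\<lambda>j. j * p) ` {1..N div p} \<subseteq> {m \<in> {1..N}. p dvd m}"
    proof
      fix m assume "m \<in> (\<lambda>j. j * p) ` {1..N div p}"
      then obtain j where j: "1 \<le> j" "j \<le> N div p" "m = j * p" by auto
      have "j * p \<le> (N div p) * p" using j by simp
      also have "\<dots> \<le> N" by simp
      finally show "m \<in> {m \<in> {1..N}. p dvd m}" using j False by auto
    qed
  qed simp
  then show ?thesis by simp
qed

lemma fact_sum:
  "(\<Sum>p\<in>{p. prime p \<and> p \<le> N}. ln (real p) * real (N div p)) \<le> ln (fact N :: real)"
proof -
  define P where "P = {p. prime p \<and> p \<le> N}"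
  have finP: "finite P" unfolding P_def by simp
  have "(\<Sum>p\<in>P. ln (real p) * real (N div p)) \<le> (\<Sum>p\<in>P. ln (real p) * real (card {m\<in>{1..N}. p dvd m}))"
    by (rule sum_mono, rule mult_left_mono) (use card_multiples prime_ge_1_nat in \<open>auto simp: P_def\<close>)
  also have "\<dots> = (\<Sum>p\<in>P. \<Sum>m\<in>{1..N}. if p dvd m then ln (real p) else 0)"
    by (simp add: sum.inter_filter[symmetric] mult.commute)
  also have "\<dots> = (\<Sum>m\<in>{1..N}. \<Sum>p\<in>P. if p dvd m then ln (real p) else 0)"
    by (rule sum.swap)
  also have "\<dots> = (\<Sum>m\<in>{1..N}. \<Sum>p\<in>prime_factors m. ln (real p))"
  proof (rule sum.cong[OF refl])
    fix m assume m: "m \<in> {1..N}"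
    have "{p\<in>P. p dvd m} = prime_factors m"
      using m by (auto simp: P_def prime_factors_dvd dest: dvd_imp_le)
    then show "(\<Sum>p\<in>P. if p dvd m then ln (real p) else 0) = (\<Sum>p\<in>prime_factors m. ln (real p))"
      using finP by (simp add: sum.inter_filter[symmetric])
  qed
  also have "\<dots> \<le> (\<Sum>m\<in>{1..N}. ln (real m))"
    by (rule sum_mono, rule sum_lnp_le) auto
  also have "\<dots> = ln (\<Prod>m\<in>{1..N}. real m)"
    by (subst ln_prod) auto
  also have "\<dots> = ln (fact N)"
    by (simp add: fact_prod)
  finally show ?thesis unfolding P_def .
qed

lemma mertens:
  assumes N: "N \<ge> 15"
  shows "(\<Sum>p\<in>{p. prime p \<and> p \<le> N}. ln (real p) / real p) \<le> 2 * ln (real N) - 1"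
proof -
  define P where "P = {p. prime p \<and> p \<le> N}"
  have Npos: "real N > 0" using N by simp
  have "(\<Sum>p\<in>P. ln (real p) / real p) \<le> (\<Sum>p\<in>P. 2 / real N * (ln (real p) * real (N div p)))"
  proof (rule sum_mono)
    fix p assume "p \<in> P"
    then have p: "prime p" "p \<le> N" by (auto simp: P_def)
    have p1: "p \<ge> 2" using prime_ge_2_nat[OF p(1)] .
    define q where "q = N div p"
    have q1: "q \<ge> 1" using p p1 unfolding q_def by (simp add: Suc_le_eq div_greater_zero_iff)
    have e: "p * q + N mod p = N" unfolding q_def by (metis div_mult_mod_eq mult.commute)
    have m: "N mod p < p" using p1 by simp
    have "p * 1 \<le> p * q" using q1 by (rule mult_le_mono2)
    then have "N \<le> 2 * (p * q)" using e m by linarith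
    then have "real N \<le> 2 * (real p * real q)" by (metis of_nat_le_iff of_nat_mult of_nat_numeral)
    then have "real N \<le> 2 * real p * real (N div p)" unfolding q_def by simp
    moreover have "ln (real p) \<ge> 0" "real p > 0" using p1 by auto
    ultimately have "real N * ln (real p) \<le> (2 * real p * real (N div p)) * ln (real p)"
      by (intro mult_right_mono) auto
    then show "ln (real p) / real p \<le> 2 / real N * (ln (real p) * real (N div p))"
      using Npos \<open>real p > 0\<close> by (simp add: field_simps)
  qed
  also have "\<dots> = 2 / real N * (\<Sum>p\<in>P. ln (real p) * real (N div p))"
    by (simp add: sum_distrib_left)
  also have "\<dots> \<le> 2 / real N * ln (fact N)"
    using fact_sum[of N] Npos unfolding P_def by (intro mult_left_mono) auto
  also have "\<dots> \<le> 2 / real N * (real N * ln (real N) - real N + ln (real N) + 1)"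
    using lnfact[of N] N Npos by (intro mult_left_mono) auto
  also have "\<dots> = 2 * ln (real N) - 2 + 2 * (ln (real N) + 1) / real N"
    using Npos by (simp add: field_simps)
  also have "\<dots> \<le> 2 * ln (real N) - 1"
  proof -
    have "ln (real N / 4) \<le> real N / 4 - 1" by (rule ln_le_minus_one) (use Npos in simp)
    moreover have "ln (real N / 4) = ln (real N) - ln 4" using Npos by (simp add: ln_div)
    moreover have "ln (4::real) \<le> 3" using ln_le_minus_one[of "4::real"] by simp
    ultimately have "ln (real N) + 1 \<le> real N / 2" using N by linarith
    then have "2 * (ln (real N) + 1) / real N \<le> 1" using Npos by (simp add: field_simps)
    then show ?thesis by linarith
  qed
  finally show ?thesis unfolding P_def .
qed

lemma geom_sum: 
  fixes r :: real assumes "r > 1"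
  shows "(\<Sum>k\<in>{1..M}. 1 / r ^ k) = 1 / (r - 1) - 1 / ((r - 1) * r ^ M)"
proof (induction M)
  case 0 then show ?case using assms by simp
next
  case (Suc M)
  have "(\<Sum>k\<in>{1..Suc M}. 1 / r ^ k) = (\<Sum>k\<in>{1..M}. 1 / r ^ k) + 1 / r ^ Suc M"
    by simp
  also have "\<dots> = 1 / (r - 1) - 1 / ((r - 1) * r ^ M) + 1 / r ^ Suc M" using Suc by simp
  also have "\<dots> = 1 / (r - 1) - 1 / ((r - 1) * r ^ Suc M)"
  proof -
    have x: "r ^ M > 0" using assms by simp
    have "1 / r ^ Suc M = 1 / ((r - 1) * r ^ M) - 1 / ((r - 1) * r ^ Suc M)"
      using assms x by (simp add: divide_simps)
    then show ?thesis by simp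
  qed
  finally show ?case .
qed

lemma geom_le: 
  fixes r :: real assumes "r > 1"
  shows "(\<Sum>k\<in>{1..M}. 1 / r ^ k) \<le> 1 / (r - 1)"
  using geom_sum[OF assms, of M] assms by simp

lemma pow_powr: "(x::real) > 0 \<Longrightarrow> (x ^ k) powr s = (x powr s) ^ k"
proof -
  assume x: "x > 0"
  have "(x ^ k) powr s = (x powr real k) powr s" using x by (simp add: powr_realpow)
  also have "\<dots> = x powr (real k * s)" by (simp add: powr_powr)
  also have "\<dots> = (x powr s) ^ k" using x by (simp add: powr_power)
  finally show ?thesis .
qed

lemma card_div_le:
  assumes p: "prime p" and k: "k \<ge> 1"
  shows "card {n\<in>Sm t y. p ^ k dvd n} \<le> Psi (t / real p ^ k) y"
  unfolding Psi_Sm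
proof (rule card_inj_on_le[where f = "\<lambda>n. n div p ^ k"])
  have pk: "p ^ k > 0" using prime_gt_0_nat[OF p] by simp
  show "inj_on (\<lambda>n. n div p ^ k) {n \<in> Sm t y. p ^ k dvd n}"
  proof (rule inj_onI)
    fix a b assume a: "a \<in> {n \<in> Sm t y. p ^ k dvd n}" and b: "b \<in> {n \<in> Sm t y. p ^ k dvd n}"
      and e: "a div p ^ k = b div p ^ k"
    have "a = a div p ^ k * p ^ k" using a by simp
    also have "\<dots> = b div p ^ k * p ^ k" using e by simp
    also have "\<dots> = b" using b by simp
    finally show "a = b" .
  qed
  show "(\<lambda>n. n div p ^ k) ` {n \<in> Sm t y. p ^ k dvd n} \<subseteq> Sm (t / real p ^ k) y"
  proof
    fix m assume "m \<in> (\<lambda>n. n div p ^ k) ` {n \<in> Sm t y. p ^ k dvd n}"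
    then obtain n where n: "n \<in> Sm t y" "p ^ k dvd n" "m = n div p ^ k" by auto
    from n(1) have n1: "n \<ge> 1" and nt: "real n \<le> t"
      and sm: "\<forall>q. prime q \<and> q dvd n \<longrightarrow> real q \<le> y" by (auto simp: Sm_def)
    have "p ^ k \<le> n" using n(2) n1 by (intro dvd_imp_le) auto
    then have m1: "m \<ge> 1" using n(3) pk by (simp add: Suc_le_eq div_greater_zero_iff)
    have "real m = real n / real (p ^ k)" using n(2,3) by (simp add: real_of_nat_div)
    also have "\<dots> \<le> t / real p ^ k" using nt pk by (simp add: divide_right_mono)
    finally have mt: "real m \<le> t / real p ^ k" .
    have "m dvd n" using n(2,3) by (metis dvd_div_mult_self dvd_triv_left)
    then have "\<forall>q. prime q \<and> q dvd m \<longrightarrow> real q \<le> y" using sm dvd_trans by blast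
    then show "m \<in> Sm (t / real p ^ k) y" using m1 mt by (simp add: Sm_def)
  qed
  show "finite (Sm (t / real p ^ k) y)" by (rule Sm_finite)
qed

lemma inner_mult:
  assumes p: "prime p" and n1: "n \<ge> 1" and nM: "n \<le> M"
  shows "(\<Sum>k\<in>{1..M}. if p ^ k dvd n then ln (real p) else 0) = real (multiplicity p n) * ln (real p)"
proof -
  have p2: "p \<ge> 2" using prime_ge_2_nat[OF p] .
  have dv: "p ^ k dvd n \<longleftrightarrow> k \<le> multiplicity p n" for k
    by (rule power_dvd_iff_le_multiplicity) (use n1 p in auto)
  have "p ^ multiplicity p n dvd n" by (rule multiplicity_dvd)
  then have "p ^ multiplicity p n \<le> n" using n1 by (intro dvd_imp_le) auto
  moreover have "multiplicity p n < 2 ^ multiplicity p n" by simp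
  moreover have "2 ^ multiplicity p n \<le> p ^ multiplicity p n" using p2 by (rule power_mono) simp
  ultimately have mM: "multiplicity p n \<le> M" using nM by linarith
  have "{k\<in>{1..M}. p ^ k dvd n} = {1..multiplicity p n}"
  proof (intro equalityI subsetI)
    fix k assume "k \<in> {k\<in>{1..M}. p ^ k dvd n}"
    then show "k \<in> {1..multiplicity p n}" using dv by simp
  next
    fix k assume "k \<in> {1..multiplicity p n}"
    then show "k \<in> {k\<in>{1..M}. p ^ k dvd n}" using dv mM by simp
  qed
  then have "(\<Sum>k\<in>{1..M}. if p ^ k dvd n then ln (real p) else 0) = (\<Sum>k\<in>{1..multiplicity p n}. ln (real p))"
    by (simp add: sum.inter_filter[symmetric])
  then show ?thesis by simp
qed

lemma smooth_sum:
  fixes t y \<sigma> C :: real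
  assumes y: "y \<ge> 2" and s: "\<sigma> > 0" and C: "C \<ge> 0" and t: "t \<ge> 1"
  and IH: "\<And>p k. prime p \<Longrightarrow> real p \<le> y \<Longrightarrow> k \<ge> 1 \<Longrightarrow> real (Psi (t / real p ^ k) y) \<le> C * (t / real p ^ k) powr \<sigma>"
  shows "(\<Sum>n\<in>Sm t y. ln (real n)) \<le> C * t powr \<sigma> * (\<Sum>p\<in>{p. prime p \<and> real p \<le> y}. ln (real p) / (real p powr \<sigma> - 1))"
proof -
  define P where "P = {p::nat. prime p \<and> real p \<le> y}"
  define M where "M = nat \<lfloor>t\<rfloor>"
  have "P \<subseteq> {..nat \<lfloor>y\<rfloor>}" by (auto simp: P_def le_nat_floor)
  then have finP: "finite P" using finite_subset by blast
  have finS: "finite (Sm t y)" by (rule Sm_finite)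
  have step1: "ln (real n) = (\<Sum>p\<in>P. \<Sum>k\<in>{1..M}. if p ^ k dvd n then ln (real p) else 0)"
    if n: "n \<in> Sm t y" for n
  proof -
    have n1: "n \<ge> 1" and nM: "n \<le> M" using n Sm_sub[of t y] by (auto simp: M_def)
    have sm: "\<forall>q. prime q \<and> q dvd n \<longrightarrow> real q \<le> y" using n by (auto simp: Sm_def)
    have "(\<Sum>p\<in>P. \<Sum>k\<in>{1..M}. if p ^ k dvd n then ln (real p) else 0)
        = (\<Sum>p\<in>P. real (multiplicity p n) * ln (real p))"
      by (rule sum.cong[OF refl], rule inner_mult) (use n1 nM in \<open>auto simp: P_def\<close>)
    also have "\<dots> = (\<Sum>p\<in>prime_factors n. real (multiplicity p n) * ln (real p))"
    proof (rule sum.mono_neutral_right[OF finP])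
      show "prime_factors n \<subseteq> P" using sm n1 by (auto simp: P_def in_prime_factors_iff)
      show "\<forall>i\<in>P - prime_factors n. real (multiplicity i n) * ln (real i) = 0"
        using n1 by (auto simp: P_def in_prime_factors_iff not_dvd_imp_multiplicity_0)
    qed
    also have "\<dots> = ln (real n)" using ln_nat_decomp[of n] n1 by simp
    finally show ?thesis by simp
  qed
  have "(\<Sum>n\<in>Sm t y. ln (real n)) = (\<Sum>n\<in>Sm t y. \<Sum>p\<in>P. \<Sum>k\<in>{1..M}. if p ^ k dvd n then ln (real p) else 0)"
    by (rule sum.cong[OF refl]) (rule step1)
  also have "\<dots> = (\<Sum>p\<in>P. \<Sum>n\<in>Sm t y. \<Sum>k\<in>{1..M}. if p ^ k dvd n then ln (real p) else 0)"
    by (rule sum.swap)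
  also have "\<dots> = (\<Sum>p\<in>P. \<Sum>k\<in>{1..M}. \<Sum>n\<in>Sm t y. if p ^ k dvd n then ln (real p) else 0)"
    by (rule sum.cong[OF refl], rule sum.swap)
  also have "\<dots> = (\<Sum>p\<in>P. \<Sum>k\<in>{1..M}. ln (real p) * real (card {n\<in>Sm t y. p ^ k dvd n}))"
    using finS by (simp add: sum.inter_filter[symmetric] mult.commute)
  also have "\<dots> \<le> (\<Sum>p\<in>P. \<Sum>k\<in>{1..M}. ln (real p) * (C * (t / real p ^ k) powr \<sigma>))"
  proof (rule sum_mono, rule sum_mono)
    fix p k assume p: "p \<in> P" and k: "k \<in> {1..M}"
    have pr: "prime p" "real p \<le> y" using p by (auto simp: P_def)
    have "real (card {n\<in>Sm t y. p ^ k dvd n}) \<le> real (Psi (t / real p ^ k) y)"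
      using card_div_le[OF pr(1), of k t y] k by simp
    also have "\<dots> \<le> C * (t / real p ^ k) powr \<sigma>" using IH[OF pr] k by simp
    finally have "real (card {n\<in>Sm t y. p ^ k dvd n}) \<le> C * (t / real p ^ k) powr \<sigma>" .
    moreover have "ln (real p) \<ge> 0" using prime_ge_1_nat[OF pr(1)] by simp
    ultimately show "ln (real p) * real (card {n\<in>Sm t y. p ^ k dvd n}) \<le> ln (real p) * (C * (t / real p ^ k) powr \<sigma>)"
      by (rule mult_left_mono)
  qed
  also have "\<dots> = (\<Sum>p\<in>P. ln (real p) * C * t powr \<sigma> * (\<Sum>k\<in>{1..M}. 1 / (real p powr \<sigma>) ^ k))"
  proof (rule sum.cong[OF refl])
    fix p assume p: "p \<in> P"
    have pos: "real p > 0" using p prime_gt_0_nat by (auto simp: P_def)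
    have "(t / real p ^ k) powr \<sigma> = t powr \<sigma> * (1 / (real p powr \<sigma>) ^ k)" for k
      using pos t by (simp add: powr_divide pow_powr)
    then show "(\<Sum>k\<in>{1..M}. ln (real p) * (C * (t / real p ^ k) powr \<sigma>)) =
          ln (real p) * C * t powr \<sigma> * (\<Sum>k\<in>{1..M}. 1 / (real p powr \<sigma>) ^ k)"
      by (simp add: sum_distrib_left mult.assoc)
  qed
  also have "\<dots> \<le> (\<Sum>p\<in>P. ln (real p) * C * t powr \<sigma> * (1 / (real p powr \<sigma> - 1)))"
  proof (rule sum_mono)
    fix p assume p: "p \<in> P"
    have p1: "real p > 1" using p prime_gt_1_nat by (auto simp: P_def)
    have r: "real p powr \<sigma> > 1" using p1 s by simp
    have "ln (real p) \<ge> 0" using p1 by simp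
    then have "ln (real p) * C * t powr \<sigma> \<ge> 0" using C by simp
    then show "ln (real p) * C * t powr \<sigma> * (\<Sum>k\<in>{1..M}. 1 / (real p powr \<sigma>) ^ k)
        \<le> ln (real p) * C * t powr \<sigma> * (1 / (real p powr \<sigma> - 1))"
      by (rule mult_left_mono[OF geom_le[OF r]])
  qed
  also have "\<dots> = C * t powr \<sigma> * (\<Sum>p\<in>P. ln (real p) / (real p powr \<sigma> - 1))"
    by (simp add: sum_distrib_left mult_ac)
  finally show ?thesis unfolding P_def .
qed

lemma exp_half_le: "exp (1/2::real) \<le> 5/3"
proof -
  have "exp (1/2::real) = exp (1/32) ^ 16" using exp_of_nat_mult[of 16 "1/32::real"] by simp
  also have "\<dots> \<le> (1 + 1/32 + (1/32)^2) ^ 16"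
    by (intro power_mono exp_bound) auto
  also have "\<dots> \<le> 5/3" by (simp add: power_divide)
  finally show ?thesis .
qed

lemma exp4_le: "exp (4::real) \<le> 67.21"
proof -
  have "exp (4::real) = exp (1/10) ^ 40" using exp_of_nat_mult[of 40 "1/10::real"] by simp
  also have "\<dots> \<le> (1 + 1/10 + (1/10)^2) ^ 40"
    by (intro power_mono exp_bound) auto
  also have "\<dots> \<le> 67.21" by (simp add: power_divide)
  finally show ?thesis .
qed

lemma exp25_le: "exp (2.5::real) \<le> 15"
proof -
  have "exp (2.5::real) = exp (1/10) ^ 25" using exp_of_nat_mult[of 25 "1/10::real"] by simp
  also have "\<dots> \<le> (1 + 1/10 + (1/10)^2) ^ 25"
    by (intro power_mono exp_bound) auto
  also have "\<dots> \<le> 15" by (simp add: power_divide)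
  finally show ?thesis .
qed

lemma exp32_ge: "exp (3.2::real) \<ge> 16"
proof -
  have "(16::real) \<le> (1 + 0.32) ^ 10" by (simp add: power_divide)
  also have "\<dots> \<le> exp (0.32) ^ 10"
    by (intro power_mono) (use exp_ge_add_one_self[of "0.32::real"] in auto)
  also have "\<dots> = exp (3.2)" using exp_of_nat_mult[of 10 "0.32::real"] by simp
  finally show ?thesis .
qed

lemma ln15: "ln (15::real) \<ge> 2.5"
  using exp25_le by (subst ln_ge_iff) auto

lemma not_prime4: "\<not> prime (4::nat)"
proof
  assume "prime (4::nat)"
  moreover have "(2::nat) dvd 4" by simp
  ultimately have "(2::nat) = 1 \<or> (2::nat) = 4" using prime_nat_iff by blast
  then show False by simp
qed

lemma powr_split:
  assumes p: "(p::real) > 0" and L: "L > 0"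
  shows "p powr (1 - 1 / (2 * L)) = p * exp (- (ln p / (2 * L)))"
proof -
  have "p powr (1 - 1 / (2 * L)) = exp ((1 - 1 / (2 * L)) * ln p)" using p by (simp add: powr_def)
  also have "(1 - 1 / (2 * L)) * ln p = ln p + - (ln p / (2 * L))" by (simp add: algebra_simps)
  also have "exp (ln p + - (ln p / (2 * L))) = exp (ln p) * exp (- (ln p / (2 * L)))" by (rule exp_add)
  also have "\<dots> = p * exp (- (ln p / (2 * L)))" using p by simp
  finally show ?thesis .
qed

lemma g_bound:
  assumes L: "L \<ge> 2.5" and p: "prime p" and pL: "ln (real p) \<le> L"
  shows "ln (real p) / (real p powr (1 - 1 / (2 * L)) - 1)
     \<le> 5/2 * (ln (real p) / real p) + (if p = 2 then 5/3 else 0) + (if p = 3 then 5/2 else 0)"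
proof -
  have p2: "real p \<ge> 2" using prime_ge_2_nat[OF p] by simp
  have lnp: "ln (real p) \<ge> 0" using p2 by simp
  define E where "E = exp (- (ln (real p) / (2 * L)))"
  have r: "real p powr (1 - 1 / (2 * L)) = real p * E" unfolding E_def
    by (rule powr_split) (use p2 L in auto)
  have E1: "E \<ge> 1 - ln (real p) / (2 * L)" unfolding E_def
    using exp_ge_add_one_self[of "- (ln (real p) / (2 * L))"] by simp
  consider "p = 2" | "p = 3" | "p \<ge> 5"
  proof -
    have "p \<ge> 2" using prime_ge_2_nat[OF p] .
    moreover have "p \<noteq> 4" using p not_prime4 by auto
    ultimately show ?thesis using that by linarith
  qed
  then show ?thesis
  proof cases
    case 1
    have l2: "ln (2::real) \<le> 1" using ln_le_minus_one[of "2::real"] by simp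
    have "ln (real p) / (2 * L) \<le> 1 / 5" using 1 l2 L by (simp add: field_simps)
    then have "E \<ge> 4/5" using E1 by linarith
    then have "real p * E - 1 \<ge> 3/5" using 1 by simp
    then have A: "ln (real p) / (real p * E - 1) \<le> 1 / (3/5)"
      using l2 1 by (intro frac_le) auto
    have h: "ln (real p) / (real p powr (1 - 1 / (2 * L)) - 1) \<le> 5/3" unfolding r using A by simp
    have "5/2 * (ln (real p) / real p) \<ge> 0" using lnp by simp
    moreover have "(if p = 2 then 5/3 else 0) = (5/3::real)"
      "(if p = 3 then 5/2 else 0) = (0::real)" using 1 by auto
    ultimately have "5/3 \<le> 5/2 * (ln (real p) / real p) + (if p = 2 then 5/3 else 0) + (if p = 3 then 5/2 else 0)"
      by simp
    with h show ?thesis by (rule order_trans)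
  next
    case 2
    have l3: "ln (3::real) \<le> 2" using ln_le_minus_one[of "3::real"] by simp
    have "ln (real p) / (2 * L) \<le> 2 / 5" using 2 l3 L by (simp add: field_simps)
    then have "E \<ge> 3/5" using E1 by linarith
    then have "real p * E - 1 \<ge> 4/5" using 2 by simp
    then have A: "ln (real p) / (real p * E - 1) \<le> 2 / (4/5)"
      using l3 2 by (intro frac_le) auto
    have h: "ln (real p) / (real p powr (1 - 1 / (2 * L)) - 1) \<le> 5/2" unfolding r using A by simp
    have "5/2 * (ln (real p) / real p) \<ge> 0" using lnp by simp
    moreover have "(if p = 2 then 5/3 else 0) = (0::real)"
      "(if p = 3 then 5/2 else 0) = (5/2::real)" using 2 by auto
    ultimately have "5/2 \<le> 5/2 * (ln (real p) / real p) + (if p = 2 then 5/3 else 0) + (if p = 3 then 5/2 else 0)"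
      by simp
    with h show ?thesis by (rule order_trans)
  next
    case 3
    have "ln (real p) / (2 * L) \<le> 1/2" using pL L by (simp add: field_simps)
    then have "E \<ge> exp (- (1/2))" unfolding E_def by simp
    moreover have "exp (- (1/2::real)) \<ge> 3/5"
      using exp_half_le by (simp add: exp_minus field_simps)
    ultimately have E35: "E \<ge> 3/5" by linarith
    have p5: "real p \<ge> 5" using 3 by simp
    have "real p * E \<ge> real p * (3/5)" using E35 p5 by (intro mult_left_mono) auto
    then have d: "real p * E - 1 \<ge> 2/5 * real p" using p5 by linarith
    have "ln (real p) / (real p * E - 1) \<le> ln (real p) / (2/5 * real p)"
      using d p5 lnp by (intro divide_left_mono) auto
    also have "\<dots> = 5/2 * (ln (real p) / real p)" by simp
    finally show ?thesis using r 3 by simp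
  qed
qed

lemma Sp_bound:
  assumes y: "y \<ge> 15"
  shows "(\<Sum>p\<in>{p. prime p \<and> real p \<le> y}. ln (real p) / (real p powr (1 - 1 / (2 * ln y)) - 1))
         \<le> 5 * ln y + 5/3"
proof -
  define L where "L = ln y"
  define P where "P = {p. prime p \<and> real p \<le> y}"
  have L: "L \<ge> 2.5" unfolding L_def using ln15 y ln_le_cancel_iff[of 15 y] by linarith
  define N where "N = nat \<lfloor>y\<rfloor>"
  have conv: "real x \<le> y" if "x \<le> nat \<lfloor>y\<rfloor>" for x :: nat
  proof -
    have "int x \<le> \<lfloor>y\<rfloor>" using that y by linarith
    then show ?thesis by (simp add: le_floor_iff)
  qed
  have PN: "P = {p. prime p \<and> p \<le> N}" unfolding P_def N_def using conv by (auto simp: le_nat_floor)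
  have finP: "finite P" unfolding PN by simp
  have N15: "N \<ge> 15" unfolding N_def using y by linarith
  have lnN: "ln (real N) \<le> L" unfolding L_def N_def using y by (subst ln_le_cancel_iff) auto
  have in2: "2 \<in> P" "3 \<in> P" using y by (auto simp: P_def)
  have "(\<Sum>p\<in>P. ln (real p) / (real p powr (1 - 1 / (2 * L)) - 1))
     \<le> (\<Sum>p\<in>P. 5/2 * (ln (real p) / real p) + (if p = 2 then 5/3 else 0) + (if p = 3 then 5/2 else 0))"
  proof (rule sum_mono)
    fix p assume "p \<in> P"
    then have p: "prime p" "real p \<le> y" by (auto simp: P_def)
    have "ln (real p) \<le> L" unfolding L_def using p prime_gt_0_nat[OF p(1)] by (subst ln_le_cancel_iff) auto
    then show "ln (real p) / (real p powr (1 - 1 / (2 * L)) - 1)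
     \<le> 5/2 * (ln (real p) / real p) + (if p = 2 then 5/3 else 0) + (if p = 3 then 5/2 else 0)"
      by (rule g_bound[OF L p(1)])
  qed
  also have "\<dots> = 5/2 * (\<Sum>p\<in>P. ln (real p) / real p) + 5/3 + 5/2"
    using finP in2 by (simp add: sum.distrib sum_distrib_left)
  also have "\<dots> \<le> 5/2 * (2 * L - 1) + 5/3 + 5/2"
  proof -
    have "(\<Sum>p\<in>P. ln (real p) / real p) \<le> 2 * ln (real N) - 1"
      unfolding PN by (rule mertens[OF N15])
    then show ?thesis using lnN by simp
  qed
  also have "\<dots> = 5 * L + 5/3" by (simp add: field_simps)
  finally show ?thesis unfolding L_def P_def .
qed

theorem lemma2:
  fixes x y :: real
  assumes "15 \<le> y" and "y < x"
  shows "real (Psi x y) \<le> 67.21 * x * exp (- (ln x / ln y) / 2)"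
proof -
  have y15: "y \<ge> 15" by fact
  define L where "L = ln y"
  define \<sigma> where "\<sigma> = 1 - 1 / (2 * L)"
  define C :: real where "C = 67.21"
  define K :: real where "K = exp 4"
  have L: "L \<ge> 2.5" unfolding L_def using ln15 y15 ln_le_cancel_iff[of 15 y] by linarith
  have s45: "\<sigma> \<ge> 4/5" unfolding \<sigma>_def using L by (simp add: field_simps)
  have s0: "\<sigma> > 0" using s45 by simp
  have C0: "C \<ge> 0" unfolding C_def by simp
  have K2: "K \<ge> 2" unfolding K_def using exp_ge_add_one_self[of "4::real"] by simp
  have Sp: "(\<Sum>p\<in>{p. prime p \<and> real p \<le> y}. ln (real p) / (real p powr \<sigma> - 1)) \<le> 5 * L + 5/3"
    unfolding \<sigma>_def L_def using Sp_bound[OF y15] .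
  have main: "\<forall>t. t < real m \<longrightarrow> real (Psi t y) \<le> C * t powr \<sigma>" for m
  proof (induction m)
    case 0
    then show ?case using C0 by (auto simp: Psi_small)
  next
    case (Suc m)
    show ?case
    proof (intro allI impI)
      fix t assume tm: "t < real (Suc m)"
      show "real (Psi t y) \<le> C * t powr \<sigma>"
      proof (cases "t < 1")
        case True
        then show ?thesis using C0 by (simp add: Psi_small)
      next
        case False
        then have t1: "t \<ge> 1" by simp
        have m1: "real m \<ge> 1" using tm t1 by simp
        have IH': "real (Psi s y) \<le> C * s powr \<sigma>" if "s \<le> t / 2" for s
          using Suc.IH that tm m1 by auto
        show ?thesis
        proof (cases "ln t \<le> 8 * L")
          case True
          have "t = t powr \<sigma> * t powr (1 - \<sigma>)" using t1 by (simp add: powr_add[symmetric])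
          also have "t powr (1 - \<sigma>) = exp (ln t / (2 * L))" using t1 by (simp add: powr_def \<sigma>_def)
          also have "\<dots> \<le> exp 4" using True L by (simp add: field_simps)
          also have "\<dots> \<le> C" unfolding C_def by (rule exp4_le)
          finally have "t \<le> t powr \<sigma> * C" by (simp add: mult_left_mono)
          then show ?thesis using Psi_triv[of t y] t1 by (simp add: mult.commute)
        next
          case False
          then have lt: "ln t > 8 * L" by simp
          define T where "T = C * t powr \<sigma>"
          define D where "D = ln t - 4"
          have T0: "T \<ge> 0" unfolding T_def using C0 by simp
          have D0: "D > 0" unfolding D_def using lt L by simp
          have tpos: "t > 0" using t1 by simp
          have H1: "(\<Sum>n\<in>Sm t y. ln (real n)) \<le> T * (\<Sum>p\<in>{p. prime p \<and> real p \<le> y}. ln (real p) / (real p powr \<sigma> - 1))"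
            unfolding T_def
          proof (rule smooth_sum)
            show "y \<ge> 2" using y15 by simp
            fix p k assume p: "prime p" "real p \<le> y" and k: "(k::nat) \<ge> 1"
            have "real p \<ge> 2" using prime_ge_2_nat[OF p(1)] by simp
            then have "real p ^ 1 \<le> real p ^ k" using k by (intro power_increasing) auto
            then have pk2: "2 \<le> real p ^ k" using \<open>real p \<ge> 2\<close> by (simp only: power_one_right)
            have "t / real p ^ k \<le> t / 2"
              by (rule divide_left_mono) (use pk2 tpos prime_gt_0_nat[OF p(1)] in \<open>auto intro!: mult_pos_pos\<close>)
            then show "real (Psi (t / real p ^ k) y) \<le> C * (t / real p ^ k) powr \<sigma>" by (rule IH')
          qed (use s0 C0 t1 in auto)
          have Kz: "z \<le> K * z" if "0 \<le> z" for z :: real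
          proof -
            have "1 * z \<le> K * z" using K2 that by (intro mult_right_mono) auto
            then show ?thesis by simp
          qed
          have sub: "{n\<in>Sm t y. real n \<le> t / K} = Sm (t / K) y"
            using K2 tpos by (auto simp: Sm_def field_simps intro: order_trans[OF Kz])
          have H2: "real (card (Sm t y)) * D \<le> (\<Sum>n\<in>Sm t y. ln (real n)) + D * real (Psi (t / K) y)"
          proof -
            have "real (card (Sm t y)) * D = (\<Sum>n\<in>Sm t y. D)" by simp
            also have "\<dots> \<le> (\<Sum>n\<in>Sm t y. ln (real n) + (if real n \<le> t / K then D else 0))"
            proof (rule sum_mono)
              fix n assume n: "n \<in> Sm t y"
              then have n1: "real n \<ge> 1" by (simp add: Sm_def)
              show "D \<le> ln (real n) + (if real n \<le> t / K then D else 0)"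
              proof (cases "real n \<le> t / K")
                case True then show ?thesis using n1 by simp
              next
                case False
                then have "t / K < real n" by simp
                then have "ln (t / K) < ln (real n)" using tpos K2 n1 by (subst ln_less_cancel_iff) auto
                moreover have "ln (t / K) = D" unfolding D_def K_def using tpos by (simp add: ln_div)
                ultimately show ?thesis using False by simp
              qed
            qed
            also have "\<dots> = (\<Sum>n\<in>Sm t y. ln (real n)) + (\<Sum>n\<in>Sm t y. if real n \<le> t / K then D else 0)"
              by (rule sum.distrib)
            also have "(\<Sum>n\<in>Sm t y. if real n \<le> t / K then D else 0) = D * real (card {n\<in>Sm t y. real n \<le> t / K})"
              using Sm_finite[of t y] by (simp add: sum.inter_filter[symmetric])
            also have "\<dots> = D * real (Psi (t / K) y)" by (simp add: sub Psi_Sm)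
            finally show ?thesis .
          qed
          have H3: "real (Psi (t / K) y) \<le> T / 16"
          proof -
            have "t / K \<le> t / 2" using K2 tpos by (intro divide_left_mono) auto
            then have "real (Psi (t / K) y) \<le> C * (t / K) powr \<sigma>" by (rule IH')
            also have "(t / K) powr \<sigma> = t powr \<sigma> / exp (4 * \<sigma>)"
            proof -
              have "(t / K) powr \<sigma> = t powr \<sigma> / K powr \<sigma>" using tpos K2 by (simp add: powr_divide)
              moreover have "K powr \<sigma> = exp (4 * \<sigma>)" unfolding K_def by (simp add: powr_def mult.commute)
              ultimately show ?thesis by simp
            qed
            also have "C * (t powr \<sigma> / exp (4 * \<sigma>)) \<le> C * (t powr \<sigma> / 16)"
            proof -
              have "exp (4 * \<sigma>) \<ge> exp 3.2" using s45 by simp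
              then have "exp (4 * \<sigma>) \<ge> 16" using exp32_ge by linarith
              then have "t powr \<sigma> / exp (4 * \<sigma>) \<le> t powr \<sigma> / 16"
                by (intro divide_left_mono) auto
              then show ?thesis using C0 by (rule mult_left_mono)
            qed
            finally show ?thesis unfolding T_def by simp
          qed
          have H4: "(\<Sum>p\<in>{p. prime p \<and> real p \<le> y}. ln (real p) / (real p powr \<sigma> - 1)) \<le> 15/16 * D"
          proof -
            have "5 * L + 5/3 \<le> 15/16 * D" using lt L unfolding D_def by (simp add: field_simps)
            with Sp show ?thesis by (rule order_trans)
          qed
          have "real (card (Sm t y)) * D \<le> T * (15/16 * D) + D * (T / 16)"
          proof -
            have "T * (\<Sum>p\<in>{p. prime p \<and> real p \<le> y}. ln (real p) / (real p powr \<sigma> - 1)) \<le> T * (15/16 * D)"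
              using H4 T0 by (rule mult_left_mono)
            moreover have "D * real (Psi (t / K) y) \<le> D * (T / 16)" using H3 D0 by simp
            ultimately show ?thesis using H1 H2 by linarith
          qed
          also have "\<dots> = T * D" by (simp add: field_simps)
          finally have "real (card (Sm t y)) \<le> T" using D0 by simp
          then show ?thesis unfolding T_def Psi_Sm .
        qed
      qed
    qed
  qed
  have xpos: "x > 0" using assms by simp
  have "x < real (nat \<lceil>x\<rceil> + 1)" by linarith
  then have "real (Psi x y) \<le> C * x powr \<sigma>" using main by blast
  also have "x powr \<sigma> = x * exp (- (ln x / ln y) / 2)"
  proof -
    have "x powr \<sigma> = exp (\<sigma> * ln x)" using xpos by (simp add: powr_def)
    also have "\<sigma> * ln x = ln x + (- (ln x / ln y) / 2)" unfolding \<sigma>_def L_def by (simp add: field_simps)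
    also have "exp (ln x + (- (ln x / ln y) / 2)) = exp (ln x) * exp (- (ln x / ln y) / 2)" by (rule exp_add)
    finally show ?thesis using xpos by simp
  qed
  finally show ?thesis unfolding C_def by (simp add: mult.assoc)
qed

end
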